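(* With $F_n$ as defined in the context, $$\int_0^{1+\frac{(\log n)^2}{n}}F_n(w)\,dw=O(n\log\log n)\qquad(n\to\infty).$$
   Context: For $w>0$ and integer $n\ge1$ let $a_n(w)=\sum_{j=0}^n w^j$, $b_n(w)=\sum_{j=1}^n jw^j$, $c_n(w)=\sum_{j=0}^n j^2w^j$, and $$F_n(w)=\frac{1}{2\sqrt{w}}\sqrt{\frac{c_n(w)}{a_n(w)}}\sqrt{\frac{a_n(w)c_n(w)-b_n(w)^2}{w\,a_n(w)^2}}.$$ (For the harmonic Kac ensemble with $m=n$, $\int_a^bF_n(w)\,dw$ equals the expected number of zeros in $\{a<|z|^2<b\}$.) $\log$ is the natural logarithm. *)

theory Defs
  imports "HOL-Analysis.Analysis" "HOL-Library.Landau_Symbols"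
begin

definition a_n :: "nat \<Rightarrow> real \<Rightarrow> real" where
  "a_n n w = (\<Sum>j=0..n. w ^ j)"

definition b_n :: "nat \<Rightarrow> real \<Rightarrow> real" where
  "b_n n w = (\<Sum>j=1..n. real j * w ^ j)"

definition c_n :: "nat \<Rightarrow> real \<Rightarrow> real" where
  "c_n n w = (\<Sum>j=0..n. (real j)^2 * w ^ j)"

definition F_n :: "nat \<Rightarrow> real \<Rightarrow> real" where
  "F_n n w = 1 / (2 * sqrt w) * sqrt (c_n n w / a_n n w)
      * sqrt ((a_n n w * c_n n w - (b_n n w)^2) / (w * (a_n n w)^2))"

end

theory Submission
  imports Defs "HOL-Real_Asymp.Real_Asymp"
begin

definition b0 :: "nat \<Rightarrow> real \<Rightarrow> real" where
  "b0 n w = (\<Sum>j=0..n. real j * w ^ j)"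

lemma b_n_alt: "b_n n w = b0 n w"
  unfolding b_n_def b0_def by (simp add: sum.atLeast_Suc_atMost[of 0 n])

lemma a_ge1: "w \<ge> 0 \<Longrightarrow> a_n n w \<ge> 1"
  unfolding a_n_def using member_le_sum[of 0 "{0..n}" "\<lambda>j. w^j"] by simp

lemma c_nonneg: "w \<ge> 0 \<Longrightarrow> c_n n w \<ge> 0"
  unfolding c_n_def by (intro sum_nonneg) auto

lemma CS: "w \<ge> 0 \<Longrightarrow> (b0 n w)^2 \<le> a_n n w * c_n n w"
proof -
  assume w: "w \<ge> 0"
  have "(\<Sum>i=0..n. \<Sum>j=0..n. w^i*w^j*(real i - real j)^2)
      = (\<Sum>i=0..n. \<Sum>j=0..n. w^i*((real j)^2*w^j) + ((real i)^2*w^i)*w^j - 2*((real i * w^i)*(real j*w^j)))"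
    by (intro sum.cong refl) (simp add: power2_diff algebra_simps)
  also have "\<dots> = a_n n w * c_n n w + c_n n w * a_n n w - 2 * (b0 n w * b0 n w)"
    unfolding a_n_def c_n_def b0_def sum_product
    by (simp add: sum.distrib sum_subtractf sum_distrib_left)
  finally have e: "(\<Sum>i=0..n. \<Sum>j=0..n. w^i*w^j*(real i - real j)^2) = 2*(a_n n w * c_n n w - (b0 n w)^2)"
    by (simp add: power2_eq_square)
  have "0 \<le> (\<Sum>i=0..n. \<Sum>j=0..n. w^i*w^j*(real i - real j)^2)"
    using w by (intro sum_nonneg) auto
  with e show ?thesis by simp
qed

lemma c_le: "w \<ge> 0 \<Longrightarrow> c_n n w \<le> (real n)^2 * w * a_n n w"
proof (cases n)
  case 0 then show ?thesis by (simp add: c_n_def)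
next
  case (Suc m)
  assume w: "w \<ge> 0"
  have "c_n n w = (\<Sum>i=0..m. (real (Suc i))^2 * w^(Suc i))"
    unfolding c_n_def Suc by (subst sum.atLeast0_atMost_Suc_shift) simp
  also have "\<dots> \<le> (\<Sum>i=0..m. (real n)^2 * w * w^i)"
  proof (intro sum_mono)
    fix i assume "i \<in> {0..m}"
    then have "real (Suc i) \<le> real n" using Suc by simp
    then have "(real (Suc i))^2 \<le> (real n)^2" by (intro power_mono) auto
    then show "(real (Suc i))^2 * w^(Suc i) \<le> (real n)^2 * w * w^i"
    proof -
      have "(real (Suc i))^2 * (w * w^i) \<le> (real n)^2 * (w * w^i)"
        using w \<open>(real (Suc i))^2 \<le> (real n)^2\<close> by (intro mult_right_mono) auto
      then show ?thesis by (simp add: algebra_simps)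
    qed
  qed
  also have "\<dots> = (real n)^2 * w * a_n m w"
    unfolding a_n_def by (simp add: sum_distrib_left)
  also have "\<dots> \<le> (real n)^2 * w * a_n n w"
    unfolding a_n_def Suc using w
    by (intro mult_left_mono) (auto simp: sum.atLeast0_atMost_Suc)
  finally show ?thesis .
qed

lemma c_ident: "(1-w)^2 * c_n n w = 2*w*a_n n w - w - (real n+1)^2 * w^(n+1) + (real n)^2 * w^(n+2)"
proof (induction n)
  case 0 then show ?case by (simp add: a_n_def c_n_def)
next
  case (Suc n)
  have "(1-w)^2 * c_n (Suc n) w = (1-w)^2 * c_n n w + (1-w)^2*(real n + 1)^2 * w^(Suc n)"
    unfolding c_n_def by (simp add: sum.atLeast0_atMost_Suc algebra_simps)
  also have "\<dots> = 2*w*a_n n w - w - (real n+1)^2 * w^(n+1) + (real n)^2 * w^(n+2) + (1-w)^2*(real n + 1)^2 * w^(Suc n)"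
    using Suc by simp
  also have "\<dots> = 2*w*a_n (Suc n) w - w - (real (Suc n)+1)^2 * w^(Suc n+1) + (real (Suc n))^2 * w^(Suc n+2)"
    unfolding a_n_def by (simp add: sum.atLeast0_atMost_Suc power2_eq_square algebra_simps)
  finally show ?case .
qed

lemma c_le2: "0 \<le> w \<Longrightarrow> w \<le> 1 \<Longrightarrow> (1-w)^2 * c_n n w \<le> 2*w*a_n n w"
proof -
  assume w: "0 \<le> w" "w \<le> 1"
  have "w^(n+2) \<le> w^(n+1)" using w by (intro power_decreasing) auto
  moreover have "(real n)^2 \<le> (real n+1)^2" by (intro power_mono) auto
  ultimately have "(real n)^2 * w^(n+2) \<le> (real n+1)^2 * w^(n+1)"
    using w by (intro mult_mono) auto
  then show ?thesis unfolding c_ident using w by linarith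
qed

lemma pw: "w \<noteq> 0 \<Longrightarrow> i \<le> n \<Longrightarrow> (w::real)^(n-i) = w^n * (1/w)^i"
  by (simp add: power_diff power_one_over)

lemma refl_a: "w \<noteq> 0 \<Longrightarrow> a_n n w = w^n * a_n n (1/w)"
proof -
  assume w: "w \<noteq> 0"
  have "a_n n w = (\<Sum>i=0..n. w^(n-i))"
    unfolding a_n_def by (subst sum.atLeastAtMost_rev) simp
  also have "\<dots> = (\<Sum>i=0..n. w^n * (1/w)^i)"
    using w by (intro sum.cong refl) (simp add: pw)
  finally show ?thesis unfolding a_n_def by (simp add: sum_distrib_left)
qed

lemma refl_b: "w \<noteq> 0 \<Longrightarrow> b0 n w = w^n * (real n * a_n n (1/w) - b0 n (1/w))"
proof -
  assume w: "w \<noteq> 0"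
  have "b0 n w = (\<Sum>i=0..n. real (n-i) * w^(n-i))"
    unfolding b0_def by (subst sum.atLeastAtMost_rev) simp
  also have "\<dots> = (\<Sum>i=0..n. w^n * (real n * (1/w)^i) - w^n * (real i * (1/w)^i))"
    using w by (intro sum.cong refl) (simp add: pw of_nat_diff algebra_simps)
  finally show ?thesis unfolding a_n_def b0_def
    by (simp add: sum_distrib_left sum_subtractf right_diff_distrib)
qed

lemma refl_c: "w \<noteq> 0 \<Longrightarrow> c_n n w = w^n * ((real n)^2 * a_n n (1/w) - 2 * real n * b0 n (1/w) + c_n n (1/w))"
proof -
  assume w: "w \<noteq> 0"
  have "c_n n w = (\<Sum>i=0..n. (real (n-i))^2 * w^(n-i))"
    unfolding c_n_def by (subst sum.atLeastAtMost_rev) simp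
  also have "\<dots> = (\<Sum>i=0..n. w^n * ((real n)^2 * (1/w)^i) - w^n * (2 * real n * (real i * (1/w)^i)) + w^n * ((real i)^2 * (1/w)^i))"
    using w by (intro sum.cong refl) (simp add: pw of_nat_diff power2_diff algebra_simps)
  finally show ?thesis unfolding a_n_def b0_def c_n_def
    by (simp add: sum_distrib_left sum_subtractf sum.distrib right_diff_distrib distrib_left)
qed

lemma refl_D: "w \<noteq> 0 \<Longrightarrow> a_n n w * c_n n w - (b0 n w)^2 = w^(2*n) * (a_n n (1/w) * c_n n (1/w) - (b0 n (1/w))^2)"
  by (simp add: refl_a[of w] refl_b[of w] refl_c[of w] power2_eq_square power_mult algebra_simps)

lemma F_eq:
  assumes w: "w > 0"
  shows "F_n n w = sqrt (c_n n w / (w * a_n n w)) * sqrt ((a_n n w * c_n n w - (b0 n w)^2) / (w * (a_n n w)^2)) / 2"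
proof -
  have a: "a_n n w > 0" using a_ge1[of w n] w by simp
  have "sqrt (c_n n w / (w * a_n n w)) = sqrt (c_n n w / a_n n w) / sqrt w"
    using w a by (simp add: real_sqrt_divide real_sqrt_mult)
  then show ?thesis unfolding F_n_def b_n_alt by simp
qed

lemma F_bounds:
  assumes w: "w > 0" and n: "n \<ge> 1"
  shows "0 \<le> F_n n w" "F_n n w \<le> (real n)^2 / 2"
    "w < 1 \<Longrightarrow> F_n n w \<le> 1 / (1-w)^2"
    "w > 1 \<Longrightarrow> F_n n w \<le> real n / (w-1)"
proof -
  define a where "a = a_n n w"
  define c where "c = c_n n w"
  define D where "D = a_n n w * c_n n w - (b0 n w)^2"
  define X where "X = c / (w*a)"
  define Y where "Y = D / (w*a^2)"
  have a: "a \<ge> 1" unfolding a_def using a_ge1[of w n] w by simp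
  have D0: "D \<ge> 0" unfolding D_def using CS[of w n] w by simp
  have Dc: "D \<le> a*c" unfolding D_def a_def c_def by simp
  have c0: "c \<ge> 0" unfolding c_def using c_nonneg[of w n] w by simp
  have Fe: "F_n n w = sqrt X * sqrt Y / 2"
    unfolding X_def Y_def a_def c_def D_def using F_eq[OF w] by simp
  have Y0: "Y \<ge> 0" unfolding Y_def using D0 a w by simp
  have YX: "Y \<le> X"
  proof -
    have "D / (w*a^2) \<le> (a*c) / (w*a^2)" using Dc a w by (intro divide_right_mono) auto
    also have "\<dots> = X" unfolding X_def using a by (simp add: power2_eq_square)
    finally show ?thesis unfolding Y_def .
  qed
  have Xn: "X \<le> (real n)^2"
    unfolding X_def using c_le[of w n] w a unfolding c_def[symmetric] a_def[symmetric]
    by (simp add: divide_le_eq mult.commute mult.left_commute)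
  have FX: "F_n n w \<le> X / 2"
  proof -
    have "sqrt X * sqrt Y \<le> sqrt X * sqrt X" using YX Y0 by (intro mult_left_mono) auto
    also have "\<dots> = X" using Y0 YX by simp
    finally show ?thesis using Fe by simp
  qed
  show "0 \<le> F_n n w" unfolding Fe using Y0 YX by simp
  show "F_n n w \<le> (real n)^2 / 2" using FX Xn by simp
  show "w < 1 \<Longrightarrow> F_n n w \<le> 1 / (1-w)^2"
  proof -
    assume w1: "w < 1"
    have "(1-w)^2 * c \<le> 2*w*a" unfolding c_def a_def using c_le2[of w n] w w1 by simp
    then have "X \<le> 2 / (1-w)^2" unfolding X_def using w w1 a
      by (simp add: divide_simps mult.commute mult.left_commute)
    then show ?thesis using FX by simp
  qed
  show "w > 1 \<Longrightarrow> F_n n w \<le> real n / (w-1)"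
  proof -
    assume w1: "w > 1"
    define u where "u = 1/w"
    have u: "0 < u" "u < 1" unfolding u_def using w1 by auto
    define A where "A = a_n n u"
    define C where "C = c_n n u"
    have A: "A \<ge> 1" unfolding A_def using a_ge1[of u n] u by simp
    have aA: "a = w^n * A" unfolding a_def A_def u_def using refl_a[of w n] w by simp
    have DD: "D = w^(2*n) * (A*C - (b0 n u)^2)" unfolding D_def A_def C_def u_def
      using refl_D[of w n] w by simp
    have C2: "(1-u)^2 * C \<le> 2*u*A" unfolding C_def A_def using c_le2[of u n] u by simp
    have "Y = (A*C - (b0 n u)^2) / (w * A^2)"
      unfolding Y_def DD aA using w by (simp add: power_mult_distrib power_mult power2_eq_square)
    also have "\<dots> \<le> (A*C) / (w*A^2)" using w A by (intro divide_right_mono) auto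
    also have "\<dots> = C / (w*A)" using A by (simp add: power2_eq_square)
    also have "\<dots> \<le> 2*u / (w*(1-u)^2)"
      using C2 u A w by (simp add: divide_simps mult.commute mult.left_commute)
    also have "\<dots> = 2 / (w-1)^2"
    proof -
      have "1 - u = (w-1)/w" unfolding u_def using w1 by (simp add: field_simps)
      then have "w*(1-u)^2 = (w-1)^2 / w" using w1 by (simp add: power2_eq_square)
      then show ?thesis unfolding u_def using w1 by simp
    qed
    finally have Y2: "Y \<le> 2/(w-1)^2" .
    have "sqrt Y \<le> sqrt (2/(w-1)^2)" using Y2 by simp
    also have "\<dots> = sqrt 2 / (w-1)" using w1 by (simp add: real_sqrt_divide)
    also have "\<dots> \<le> 2 / (w-1)"
    proof -
      have "sqrt 2 \<le> sqrt (2^2)" by (intro real_sqrt_le_mono) simp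
      then have "sqrt 2 \<le> 2" by simp
      then show ?thesis using w1 by (intro divide_right_mono) auto
    qed
    finally have sY: "sqrt Y \<le> 2/(w-1)" .
    have sX: "sqrt X \<le> real n" using Xn Y0 YX real_sqrt_le_mono[OF Xn] by simp
    have "sqrt X * sqrt Y \<le> real n * (2/(w-1))"
      using sX sY Y0 YX by (intro mult_mono) auto
    also have "\<dots> = 2 * (real n / (w-1))" by simp
    finally show ?thesis unfolding Fe by (simp add: mult.commute)
  qed
qed

lemma cont_a [continuous_intros]: "continuous_on S (\<lambda>w. a_n n w)"
  unfolding a_n_def by (intro continuous_intros)
lemma cont_b [continuous_intros]: "continuous_on S (\<lambda>w. b_n n w)"
  unfolding b_n_def by (intro continuous_intros)
lemma cont_c [continuous_intros]: "continuous_on S (\<lambda>w. c_n n w)"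
  unfolding c_n_def by (intro continuous_intros)

lemma a_ne: "w \<ge> 0 \<Longrightarrow> a_n n w \<noteq> 0"
  using a_ge1[of w n] by simp

lemma F_cont: "continuous_on {0<..} (F_n n)"
proof -
  have "continuous_on {0<..} (\<lambda>w. 1 / (2 * sqrt w) * sqrt (c_n n w / a_n n w)
      * sqrt ((a_n n w * c_n n w - (b_n n w)^2) / (w * (a_n n w)^2)))"
    by (intro continuous_intros) (auto simp: a_ne)
  then show ?thesis unfolding F_n_def[abs_def] .
qed

lemma F0: "F_n n 0 = 0" unfolding F_n_def by simp

lemma F_int:
  assumes n: "n \<ge> 1"
  shows "F_n n integrable_on {0..T}"
proof -
  have "F_n n \<in> borel_measurable (lebesgue_on {0<..T})"
    by (intro continuous_imp_measurable_on_sets_lebesgue continuous_on_subset[OF F_cont]) auto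
  then have "F_n n measurable_on {0<..T}"
    by (subst measurable_on_iff_borel_measurable) auto
  then have "F_n n measurable_on {0..T}"
    by (rule measurable_on_spike_set) (rule negligible_subset[of "{0}"], auto)
  then have m: "F_n n \<in> borel_measurable (lebesgue_on {0..T})"
    by (subst measurable_on_iff_borel_measurable[symmetric]) auto
  show ?thesis
  proof (rule measurable_bounded_by_integrable_imp_integrable[OF m])
    show "(\<lambda>x. (real n)^2/2) integrable_on {0..T}" by auto
    fix x :: real assume "x \<in> {0..T}"
    then show "norm (F_n n x) \<le> (real n)^2/2"
      using F_bounds[of x n] n F0[of n] by (cases "x = 0") auto
  qed auto
qed

lemma int_le_has:
  fixes f g :: "real \<Rightarrow> real"
  assumes "f integrable_on {a..b}" "(g has_integral v) {a..b}" "\<And>x. x \<in> {a..b} \<Longrightarrow> f x \<le> g x"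
  shows "integral {a..b} f \<le> v"
proof -
  have "integral {a..b} f \<le> integral {a..b} g"
    using assms by (intro integral_le) (auto simp: has_integral_integrable)
  then show ?thesis using assms(2) integral_unique by metis
qed

lemma main_bound:
  assumes n: "n \<ge> 1" and L: "ln (real n) \<ge> 1"
  shows "integral {0..1 + (ln (real n))^2 / real n} (F_n n) \<le> 2*real n + 2*real n*ln(ln (real n))"
proof -
  define N where "N = real n"
  define L where "L = ln N"
  define p where "p = 1 - 1/N"
  define q where "q = 1 + 1/N"
  define T where "T = 1 + L^2/N"
  have N: "N \<ge> 1" unfolding N_def using n by simp
  have L1: "L \<ge> 1" unfolding L_def N_def using L by simp
  have p0: "0 \<le> p" unfolding p_def using N by simp
  have pq: "p \<le> q" unfolding p_def q_def using N by simp
  have qT: "q \<le> T" unfolding q_def T_def using N L1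
    by (simp add: divide_right_mono one_le_power)
  have p1: "p < 1" unfolding p_def using N by simp
  have q1: "q > 1" unfolding q_def using N by simp
  have iT: "F_n n integrable_on {0..T}" using F_int n by blast
  have ipT: "F_n n integrable_on {p..T}" by (rule integrable_on_subinterval[OF iT]) (use p0 in auto)
  have e1: "integral {0..T} (F_n n) = integral {0..p} (F_n n) + integral {p..T} (F_n n)"
    using Henstock_Kurzweil_Integration.integral_combine[OF p0 _ iT] pq qT by simp
  have e2: "integral {p..T} (F_n n) = integral {p..q} (F_n n) + integral {q..T} (F_n n)"
    using Henstock_Kurzweil_Integration.integral_combine[OF pq qT ipT] by simp
  have i1: "integral {0..p} (F_n n) \<le> N - 1"
  proof (rule int_le_has)
    show "F_n n integrable_on {0..p}" by (rule integrable_on_subinterval[OF iT]) (use pq qT in auto)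
    have "((\<lambda>w. 1/(1-w)^2) has_integral (1/(1-p) - 1/(1-0))) {0..p}"
    proof (rule fundamental_theorem_of_calculus[OF p0])
      fix x assume x: "x \<in> {0..p}"
      then have "x < 1" using p1 by auto
      then have "((\<lambda>w. 1/(1-w)) has_real_derivative 1/(1-x)^2) (at x within {0..p})"
        by (auto intro!: derivative_eq_intros simp: power2_eq_square)
      then show "((\<lambda>w. 1/(1-w)) has_vector_derivative 1/(1-x)^2) (at x within {0..p})"
        by (simp add: has_real_derivative_iff_has_vector_derivative)
    qed
    moreover have "1/(1-p) - 1/(1-0) = N - 1" unfolding p_def using N by simp
    ultimately show "((\<lambda>w. 1/(1-w)^2) has_integral (N-1)) {0..p}" by simp
    fix x assume x: "x \<in> {0..p}"
    show "F_n n x \<le> 1/(1-x)^2"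
    proof (cases "x = 0")
      case True then show ?thesis by (simp add: F0)
    next
      case False then show ?thesis using F_bounds(3)[of x n] x n p1 by auto
    qed
  qed
  have i2: "integral {p..q} (F_n n) \<le> N"
  proof (rule int_le_has)
    show "F_n n integrable_on {p..q}" by (rule integrable_on_subinterval[OF iT]) (use p0 qT in auto)
    have "measure lborel {p..q} *\<^sub>R (N^2/2) = N" unfolding p_def q_def using N
      by (simp add: power2_eq_square field_simps)
    then show "((\<lambda>w. N^2/2) has_integral N) {p..q}" using has_integral_const_real[of "N^2/2" p q] by simp
    fix x assume x: "x \<in> {p..q}"
    show "F_n n x \<le> N^2/2"
    proof (cases "x = 0")
      case True then show ?thesis by (simp add: F0)
    next
      case False then show ?thesis using F_bounds(2)[of x n] x n p0 unfolding N_def by auto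
    qed
  qed
  have i3: "integral {q..T} (F_n n) \<le> 2*N*ln L"
  proof (rule int_le_has)
    show "F_n n integrable_on {q..T}" by (rule integrable_on_subinterval[OF iT]) (use p0 pq in auto)
    have "((\<lambda>w. N/(w-1)) has_integral (N*ln(T-1) - N*ln(q-1))) {q..T}"
    proof (rule fundamental_theorem_of_calculus[OF qT])
      fix x assume x: "x \<in> {q..T}"
      then have "x > 1" using q1 by auto
      then have "((\<lambda>w. N*ln(w-1)) has_real_derivative N/(x-1)) (at x within {q..T})"
        by (auto intro!: derivative_eq_intros)
      then show "((\<lambda>w. N*ln(w-1)) has_vector_derivative N/(x-1)) (at x within {q..T})"
        by (simp add: has_real_derivative_iff_has_vector_derivative)
    qed
    moreover have "N*ln(T-1) - N*ln(q-1) = 2*N*ln L"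
    proof -
      have "ln (T-1) = ln (L^2) - ln N" unfolding T_def using N L1 by (simp add: ln_div)
      moreover have "ln (q-1) = - ln N" unfolding q_def using N by (simp add: ln_div)
      moreover have "ln (L^2) = 2 * ln L" using L1 by (simp add: ln_realpow)
      ultimately have "ln (T-1) - ln (q-1) = 2 * ln L" by linarith
      then have "N * (ln (T-1) - ln (q-1)) = N * (2 * ln L)" by simp
      then show ?thesis by (simp add: algebra_simps)
    qed
    ultimately show "((\<lambda>w. N/(w-1)) has_integral (2*N*ln L)) {q..T}" by simp
    fix x assume x: "x \<in> {q..T}"
    then show "F_n n x \<le> N/(x-1)" using F_bounds(4)[of x n] n q1 unfolding N_def by auto
  qed
  have "integral {0..T} (F_n n) \<le> (N-1) + N + 2*N*ln L" using e1 e2 i1 i2 i3 by linarith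
  then show ?thesis unfolding T_def L_def N_def by simp
qed

theorem proposition3p1:
  "(\<forall>\<^sub>F n in sequentially. F_n n integrable_on {0..1 + (ln (real n))^2 / real n}) \<and>
   (\<lambda>n. integral {0..1 + (ln (real n))^2 / real n} (F_n n))
      \<in> O(\<lambda>n. real n * ln (ln (real n)))"
proof
  show "\<forall>\<^sub>F n in sequentially. F_n n integrable_on {0..1 + (ln (real n))^2 / real n}"
    using eventually_ge_at_top[of "1::nat"] by eventually_elim (rule F_int)
  have e1: "\<forall>\<^sub>F n in sequentially. ln (ln (real n)) \<ge> 1" by real_asymp
  have e2: "\<forall>\<^sub>F n in sequentially. ln (real n) \<ge> 1" by real_asymp
  show "(\<lambda>n. integral {0..1 + (ln (real n))^2 / real n} (F_n n)) \<in> O(\<lambda>n. real n * ln (ln (real n)))"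
  proof (rule bigoI[where c = 4])
    show "\<forall>\<^sub>F n in sequentially. norm (integral {0..1 + (ln (real n))^2 / real n} (F_n n))
        \<le> 4 * norm (real n * ln (ln (real n)))"
      using e1 e2 eventually_ge_at_top[of "1::nat"]
    proof eventually_elim
      case (elim n)
      let ?I = "integral {0..1 + (ln (real n))^2 / real n} (F_n n)"
      have I0: "?I \<ge> 0"
      proof (rule integral_nonneg)
        show "F_n n integrable_on {0..1 + (ln (real n))^2 / real n}" using F_int elim by blast
        fix x :: real assume "x \<in> {0..1 + (ln (real n))^2 / real n}"
        then show "0 \<le> F_n n x" using F_bounds(1)[of x n] elim F0[of n] by (cases "x = 0") auto
      qed
      have "?I \<le> 2*real n + 2*real n*ln(ln (real n))" using main_bound elim by blast
      also have "\<dots> \<le> 4 * (real n * ln (ln (real n)))" using elim by simp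
      finally show ?case using I0 elim by simp
    qed
  qed
qed

end
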